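(* Let $k\ge 7$. Then there is a finite group $H$ with an elementary abelian $2$-subgroup $1\ne M\trianglelefteq H$ such that $H/M\cong A_k$, the extension $1\to M\to H\to A_k\to 1$ is nonsplit, and $H$ has a faithful transitive permutation representation of degree at most $2k(k-1)$.
   Context: An extension is nonsplit if $M$ has no complement in $H$. *)

theory Defs
  imports "HOL-Algebra.Algebra"
begin

definition elementary_abelian_2_subgroup :: "('a, 'b) monoid_scheme \<Rightarrow> 'a set \<Rightarrow> bool" where
  "elementary_abelian_2_subgroup G M \<longleftrightarrow>
     subgroup M G \<and>
     (\<forall>x\<in>M. \<forall>y\<in>M. x \<otimes>\<^bsub>G\<^esub> y = y \<otimes>\<^bsub>G\<^esub> x) \<and>
     (\<forall>x\<in>M. x \<otimes>\<^bsub>G\<^esub> x = \<one>\<^bsub>G\<^esub>)"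

definition is_complement :: "('a, 'b) monoid_scheme \<Rightarrow> 'a set \<Rightarrow> 'a set \<Rightarrow> bool" where
  "is_complement G M K \<longleftrightarrow>
     subgroup K G \<and> K \<inter> M = {\<one>\<^bsub>G\<^esub>} \<and> M <#>\<^bsub>G\<^esub> K = carrier G"

definition nonsplit_extension :: "('a, 'b) monoid_scheme \<Rightarrow> 'a set \<Rightarrow> bool" where
  "nonsplit_extension G M \<longleftrightarrow> \<not> (\<exists>K. is_complement G M K)"

end

theory Submission
  imports Defs "HOL-Library.Countable"
begin

locale good =
  fixes k :: nat and G :: "'a monoid" and \<psi> :: "'a \<Rightarrow> nat \<Rightarrow> nat"
  assumes gG: "group G"
    and fin: "finite (carrier G)"
    and hom: "\<psi> \<in> hom G (alt_group k)"
    and surj: "\<psi> ` carrier G = carrier (alt_group k)"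
    and ex1: "\<exists>x\<in>carrier G. \<psi> x = id \<and> x \<noteq> \<one>\<^bsub>G\<^esub>"
    and comm: "\<And>x y. x\<in>carrier G \<Longrightarrow> y\<in>carrier G \<Longrightarrow> \<psi> x = id \<Longrightarrow> \<psi> y = id \<Longrightarrow> x \<otimes>\<^bsub>G\<^esub> y = y \<otimes>\<^bsub>G\<^esub> x"
    and sq: "\<And>x. x\<in>carrier G \<Longrightarrow> \<psi> x = id \<Longrightarrow> x \<otimes>\<^bsub>G\<^esub> x = \<one>\<^bsub>G\<^esub>"
    and s0: "\<exists>\<sigma>0\<in>carrier (alt_group k). \<sigma>0 \<circ> \<sigma>0 = id \<and> (\<forall>x\<in>carrier G. \<psi> x = \<sigma>0 \<longrightarrow> x \<otimes>\<^bsub>G\<^esub> x \<noteq> \<one>\<^bsub>G\<^esub>)"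
    and act: "\<exists>(E :: nat set) \<phi>. E \<noteq> {} \<and> finite E \<and> card E \<le> 2 * k * (k - 1) \<and>
              group_action G E \<phi> \<and> faithful_action G E \<phi> \<and> transitive_action G E \<phi>"

lemma (in good) final:
  shows "\<exists>(M :: 'a set).
           group G \<and> finite (carrier G) \<and>
           M \<lhd> G \<and> M \<noteq> {\<one>\<^bsub>G\<^esub>} \<and> elementary_abelian_2_subgroup G M \<and>
           G Mod M \<cong> alt_group k \<and>
           nonsplit_extension G M \<and>
           (\<exists>(E :: nat set) \<phi>. E \<noteq> {} \<and> finite E \<and> card E \<le> 2 * k * (k - 1) \<and>
              group_action G E \<phi> \<and> faithful_action G E \<phi> \<and> transitive_action G E \<phi>)"
proof -
  have gh: "group_hom G (alt_group k) \<psi>"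
    using gG hom alt_group_is_group unfolding group_hom_def group_hom_axioms_def by auto
  define M where "M = kernel G (alt_group k) \<psi>"
  have Mk: "x \<in> M \<longleftrightarrow> x \<in> carrier G \<and> \<psi> x = id" for x
    by (simp add: M_def kernel_def alt_group_one)
  have norm: "M \<lhd> G" unfolding M_def by (rule group_hom.normal_kernel[OF gh])
  have sub: "subgroup M G" unfolding M_def by (rule group_hom.subgroup_kernel[OF gh])
  have ne: "M \<noteq> {\<one>\<^bsub>G\<^esub>}" using ex1 Mk by blast
  have ea: "elementary_abelian_2_subgroup G M"
    unfolding elementary_abelian_2_subgroup_def
  proof (intro conjI ballI)
    fix x y assume "x \<in> M" "y \<in> M" thus "x \<otimes>\<^bsub>G\<^esub> y = y \<otimes>\<^bsub>G\<^esub> x" using comm Mk by blast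
  next
    fix x assume "x \<in> M" thus "x \<otimes>\<^bsub>G\<^esub> x = \<one>\<^bsub>G\<^esub>" using sq Mk by blast
  qed (rule sub)
  have iso: "G Mod M \<cong> alt_group k" unfolding M_def
    using group_hom.FactGroup_iso[OF gh surj] .
  have ns: "nonsplit_extension G M"
    unfolding nonsplit_extension_def
  proof
    assume "\<exists>K. is_complement G M K"
    then obtain K where K: "subgroup K G" "K \<inter> M = {\<one>\<^bsub>G\<^esub>}" "M <#>\<^bsub>G\<^esub> K = carrier G"
      unfolding is_complement_def by blast
    obtain \<sigma>0 where s0: "\<sigma>0 \<in> carrier (alt_group k)" "\<sigma>0 \<circ> \<sigma>0 = id"
      "\<And>x. x\<in>carrier G \<Longrightarrow> \<psi> x = \<sigma>0 \<Longrightarrow> x \<otimes>\<^bsub>G\<^esub> x \<noteq> \<one>\<^bsub>G\<^esub>" using s0 by blast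
    have "\<sigma>0 \<in> \<psi> ` carrier G" using surj s0(1) by simp
    then obtain x where x: "x \<in> carrier G" "\<psi> x = \<sigma>0" by blast
    have "x \<in> M <#>\<^bsub>G\<^esub> K" using K(3) x(1) by simp
    then obtain m h where mh: "m \<in> M" "h \<in> K" "x = m \<otimes>\<^bsub>G\<^esub> h"
      unfolding set_mult_def by blast
    have hc: "h \<in> carrier G" using mh(2) subgroup.subset[OF K(1)] by blast
    have mc: "m \<in> carrier G" using mh Mk by blast
    have "\<psi> x = \<psi> m \<circ> \<psi> h" using mh hom_mult[OF hom mc hc] by (simp add: alt_group_mult)
    hence ph: "\<psi> h = \<sigma>0" using mh Mk x by simp
    have hh: "h \<otimes>\<^bsub>G\<^esub> h \<in> K" by (rule subgroup.m_closed[OF K(1) mh(2) mh(2)])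
    have "\<psi> (h \<otimes>\<^bsub>G\<^esub> h) = id" using hom_mult[OF hom hc hc] ph s0 by (simp add: alt_group_mult)
    moreover have "h \<otimes>\<^bsub>G\<^esub> h \<in> carrier G" using hc gG by (simp add: group.is_monoid monoid.m_closed)
    ultimately have "h \<otimes>\<^bsub>G\<^esub> h \<in> M" using Mk by blast
    hence "h \<otimes>\<^bsub>G\<^esub> h = \<one>\<^bsub>G\<^esub>" using hh K(2) by blast
    thus False using s0 hc ph by blast
  qed
  show ?thesis apply (rule exI[of _ M]) using gG fin act norm ne ea iso ns by simp
qed

lemma good_transport:
  assumes gd: "good k G \<psi>" and gH: "group H" and gh: "g \<in> hom H G"
    and bij: "bij_betw g (carrier H) (carrier G)"
  shows "good k H (\<psi> \<circ> g)"
proof -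
  interpret good k G \<psi> by (rule gd)
  have GH: "group_hom H G g" using gH gG gh unfolding group_hom_def group_hom_axioms_def by auto
  have inj: "inj_on g (carrier H)" and im: "g ` carrier H = carrier G"
    using bij unfolding bij_betw_def by auto
  have g1: "g \<one>\<^bsub>H\<^esub> = \<one>\<^bsub>G\<^esub>" by (rule group_hom.hom_one[OF GH])
  have gc: "x \<in> carrier H \<Longrightarrow> g x \<in> carrier G" for x using hom_in_carrier[OF gh] .
  have gm: "x \<in> carrier H \<Longrightarrow> y \<in> carrier H \<Longrightarrow> g (x \<otimes>\<^bsub>H\<^esub> y) = g x \<otimes>\<^bsub>G\<^esub> g y" for x y
    using hom_mult[OF gh] .
  have mc: "x \<in> carrier H \<Longrightarrow> y \<in> carrier H \<Longrightarrow> x \<otimes>\<^bsub>H\<^esub> y \<in> carrier H" for x y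
    using gH by (simp add: group.is_monoid monoid.m_closed)
  have oc: "\<one>\<^bsub>H\<^esub> \<in> carrier H" using gH by (simp add: group.is_monoid monoid.one_closed)
  have eqI: "x \<in> carrier H \<Longrightarrow> y \<in> carrier H \<Longrightarrow> g x = g y \<Longrightarrow> x = y" for x y
    using inj inj_onD by metis
  show ?thesis
  proof (rule good.intro)
    show "group H" by (rule gH)
    show "finite (carrier H)" using fin bij bij_betw_finite by blast
    show "\<psi> \<circ> g \<in> hom H (alt_group k)" by (rule hom_compose[OF gh hom])
    show "(\<psi> \<circ> g) ` carrier H = carrier (alt_group k)" by (metis image_comp im surj)
    show "\<exists>x\<in>carrier H. (\<psi> \<circ> g) x = id \<and> x \<noteq> \<one>\<^bsub>H\<^esub>"
    proof -
      obtain x where x: "x \<in> carrier G" "\<psi> x = id" "x \<noteq> \<one>\<^bsub>G\<^esub>" using ex1 by blast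
      then obtain h where h: "h \<in> carrier H" "x = g h" using im by blast
      show ?thesis using x h g1 by (intro bexI[of _ h]) auto
    qed
    show "x \<otimes>\<^bsub>H\<^esub> y = y \<otimes>\<^bsub>H\<^esub> x" if "x\<in>carrier H" "y\<in>carrier H" "(\<psi> \<circ> g) x = id" "(\<psi> \<circ> g) y = id" for x y
      using that comm[of "g x" "g y"] gc gm mc eqI by simp
    show "x \<otimes>\<^bsub>H\<^esub> x = \<one>\<^bsub>H\<^esub>" if "x\<in>carrier H" "(\<psi> \<circ> g) x = id" for x
      using that sq[of "g x"] gc gm mc eqI oc g1 by simp
    show "\<exists>\<sigma>0\<in>carrier (alt_group k). \<sigma>0 \<circ> \<sigma>0 = id \<and> (\<forall>x\<in>carrier H. (\<psi> \<circ> g) x = \<sigma>0 \<longrightarrow> x \<otimes>\<^bsub>H\<^esub> x \<noteq> \<one>\<^bsub>H\<^esub>)"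
    proof -
      obtain \<sigma>0 where s: "\<sigma>0 \<in> carrier (alt_group k)" "\<sigma>0 \<circ> \<sigma>0 = id"
        "\<And>x. x\<in>carrier G \<Longrightarrow> \<psi> x = \<sigma>0 \<Longrightarrow> x \<otimes>\<^bsub>G\<^esub> x \<noteq> \<one>\<^bsub>G\<^esub>" using s0 by blast
      have "x \<otimes>\<^bsub>H\<^esub> x \<noteq> \<one>\<^bsub>H\<^esub>" if "x\<in>carrier H" "(\<psi> \<circ> g) x = \<sigma>0" for x
      proof
        assume "x \<otimes>\<^bsub>H\<^esub> x = \<one>\<^bsub>H\<^esub>"
        hence "g x \<otimes>\<^bsub>G\<^esub> g x = \<one>\<^bsub>G\<^esub>" using gm[OF that(1) that(1)] g1 by simp
        thus False using s(3)[of "g x"] that gc by simp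
      qed
      thus ?thesis using s by blast
    qed
    show "\<exists>(E :: nat set) \<phi>. E \<noteq> {} \<and> finite E \<and> card E \<le> 2 * k * (k - 1) \<and>
              group_action H E \<phi> \<and> faithful_action H E \<phi> \<and> transitive_action H E \<phi>"
    proof -
      obtain E :: "nat set" and \<phi> where E: "E \<noteq> {}" "finite E" "card E \<le> 2 * k * (k - 1)"
        "group_action G E \<phi>" "faithful_action G E \<phi>" "transitive_action G E \<phi>" using act by blast
      have gh2: "group_hom G (BijGroup E) \<phi>" using E(4) unfolding group_action_def .
      have ga: "group_action H E (\<phi> \<circ> g)" unfolding group_action_def group_hom_def group_hom_axioms_def
        using gh2 gH hom_compose[OF gh] unfolding group_hom_def group_hom_axioms_def by blast
      have "inj_on \<phi> (carrier G)" using E(5) unfolding faithful_action_def faithful_action_axioms_def by blast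
      hence "inj_on (\<phi> \<circ> g) (carrier H)" using inj im by (simp add: comp_inj_on)
      hence fa: "faithful_action H E (\<phi> \<circ> g)" using ga unfolding faithful_action_def faithful_action_axioms_def by blast
      have "\<exists>h\<in>carrier H. (\<phi> \<circ> g) h x = y" if xy: "x \<in> E" "y \<in> E" for x y
      proof -
        obtain a where a: "a \<in> carrier G" "\<phi> a x = y" using E(6) xy
          unfolding transitive_action_def transitive_action_axioms_def by blast
        then obtain h where "h \<in> carrier H" "a = g h" using im by blast
        thus ?thesis using a by auto
      qed
      hence "transitive_action H E (\<phi> \<circ> g)" using ga unfolding transitive_action_def transitive_action_axioms_def by blast
      thus ?thesis using E ga fa by blast
    qed
  qed
qed

lemma nat_copy:
  fixes G :: "'a monoid" and f :: "'a \<Rightarrow> nat"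
  assumes gG: "group G" and inj: "inj_on f (carrier G)"
  shows "\<exists>(H :: nat monoid) g. group H \<and> g \<in> hom H G \<and> bij_betw g (carrier H) (carrier G)"
proof -
  define g where "g = inv_into (carrier G) f"
  define H where "H = \<lparr>carrier = f ` carrier G, monoid.mult = (\<lambda>x y. f (g x \<otimes>\<^bsub>G\<^esub> g y)), one = f \<one>\<^bsub>G\<^esub>\<rparr>"
  have gf: "a \<in> carrier G \<Longrightarrow> g (f a) = a" for a unfolding g_def using inj by simp
  have cH: "carrier H = f ` carrier G" and mH: "\<And>x y. x \<otimes>\<^bsub>H\<^esub> y = f (g x \<otimes>\<^bsub>G\<^esub> g y)"
     and oH: "\<one>\<^bsub>H\<^esub> = f \<one>\<^bsub>G\<^esub>" unfolding H_def by auto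
  interpret G: group G by (rule gG)
  have gH: "group H"
  proof (rule groupI)
    fix x y assume "x \<in> carrier H" "y \<in> carrier H"
    thus "x \<otimes>\<^bsub>H\<^esub> y \<in> carrier H" unfolding cH mH by (auto simp: gf)
  next
    show "\<one>\<^bsub>H\<^esub> \<in> carrier H" unfolding cH oH by auto
  next
    fix x y z assume "x \<in> carrier H" "y \<in> carrier H" "z \<in> carrier H"
    thus "x \<otimes>\<^bsub>H\<^esub> y \<otimes>\<^bsub>H\<^esub> z = x \<otimes>\<^bsub>H\<^esub> (y \<otimes>\<^bsub>H\<^esub> z)" unfolding cH mH by (auto simp: gf G.m_assoc)
  next
    fix x assume "x \<in> carrier H"
    thus "\<one>\<^bsub>H\<^esub> \<otimes>\<^bsub>H\<^esub> x = x" unfolding cH mH oH by (auto simp: gf)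
  next
    fix x assume x: "x \<in> carrier H"
    then obtain a where a: "a \<in> carrier G" "x = f a" unfolding cH by blast
    show "\<exists>y\<in>carrier H. y \<otimes>\<^bsub>H\<^esub> x = \<one>\<^bsub>H\<^esub>"
      by (rule bexI[of _ "f (inv\<^bsub>G\<^esub> a)"]) (use a in \<open>auto simp: cH mH oH gf\<close>)
  qed
  have "g \<in> hom H G" unfolding hom_def by (auto simp: cH mH gf)
  moreover have "bij_betw g (carrier H) (carrier G)"
    unfolding cH g_def by (rule bij_betw_inv_into[OF inj_on_imp_bij_betw[OF inj]])
  ultimately show ?thesis using gH by blast
qed

type_synonym elt = "(nat \<Rightarrow> nat) \<times> (nat \<times> nat \<Rightarrow> bool)"

definition invn :: "(nat \<Rightarrow> nat) \<Rightarrow> nat \<Rightarrow> nat \<Rightarrow> bool" where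
  "invn \<sigma> i j = ((i < j) \<noteq> (\<sigma> i < \<sigma> j))"

definition Cset :: "nat \<Rightarrow> elt set" where
  "Cset k = {x. fst x permutes {1..k} \<and> evenperm (fst x) \<and>
     (\<forall>i j. snd x (i,j) \<longrightarrow> i \<in> {1..k} \<and> j \<in> {1..k} \<and> i \<noteq> j) \<and>
     (\<forall>i\<in>{1..k}. \<forall>j\<in>{1..k}. i \<noteq> j \<longrightarrow> (snd x (i,j) \<noteq> snd x (j,i)) = invn (fst x) i j)}"

definition mulc :: "elt \<Rightarrow> elt \<Rightarrow> elt" where
  "mulc x y = (fst x \<circ> fst y, \<lambda>p. snd y p \<noteq> snd x (fst y (fst p), fst y (snd p)))"

definition onec :: elt where "onec = (id, \<lambda>_. False)"

definition Gc :: "nat \<Rightarrow> elt monoid" where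
  "Gc k = \<lparr>carrier = Cset k, monoid.mult = mulc, one = onec\<rparr>"

lemma Cset_iff: "(\<sigma>, d) \<in> Cset k \<longleftrightarrow> \<sigma> permutes {1..k} \<and> evenperm \<sigma> \<and>
     (\<forall>i j. d (i,j) \<longrightarrow> i \<in> {1..k} \<and> j \<in> {1..k} \<and> i \<noteq> j) \<and>
     (\<forall>i\<in>{1..k}. \<forall>j\<in>{1..k}. i \<noteq> j \<longrightarrow> (d (i,j) \<noteq> d (j,i)) = invn \<sigma> i j)"
  by (simp add: Cset_def)

lemma mulc_simp: "mulc (\<tau>, e) (\<sigma>, d) = (\<tau> \<circ> \<sigma>, \<lambda>(i,j). d (i,j) \<noteq> e (\<sigma> i, \<sigma> j))"
  by (simp add: mulc_def fun_eq_iff)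

lemma perm_k: "\<sigma> permutes {1..(k::nat)} \<Longrightarrow> permutation \<sigma>"
  by (rule permutes_imp_permutation[of "{1..k}"]) simp_all

lemma perm_even_comp:
  assumes "\<sigma> permutes {1..(k::nat)}" "\<tau> permutes {1..k}" "evenperm \<sigma>" "evenperm \<tau>"
  shows "evenperm (\<tau> \<circ> \<sigma>)"
proof -
  have "permutation \<sigma>" "permutation \<tau>" using perm_k[OF assms(1)] perm_k[OF assms(2)] by auto
  thus ?thesis using assms(3,4) evenperm_comp[of \<tau> \<sigma>] by simp
qed

lemma mulc_closed:
  assumes x: "(\<tau>, e) \<in> Cset k" and y: "(\<sigma>, d) \<in> Cset k"
  shows "mulc (\<tau>, e) (\<sigma>, d) \<in> Cset k"
proof -
  have t: "\<tau> permutes {1..k}" "evenperm \<tau>" "\<And>i j. e (i,j) \<Longrightarrow> i \<in> {1..k} \<and> j \<in> {1..k} \<and> i \<noteq> j"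
    "\<And>i j. i\<in>{1..k} \<Longrightarrow> j\<in>{1..k} \<Longrightarrow> i \<noteq> j \<Longrightarrow> (e (i,j) \<noteq> e (j,i)) = invn \<tau> i j"
    using x by (auto simp: Cset_iff)
  have s: "\<sigma> permutes {1..k}" "evenperm \<sigma>" "\<And>i j. d (i,j) \<Longrightarrow> i \<in> {1..k} \<and> j \<in> {1..k} \<and> i \<noteq> j"
    "\<And>i j. i\<in>{1..k} \<Longrightarrow> j\<in>{1..k} \<Longrightarrow> i \<noteq> j \<Longrightarrow> (d (i,j) \<noteq> d (j,i)) = invn \<sigma> i j"
    using y by (auto simp: Cset_iff)
  have sm: "\<sigma> i \<in> {1..k} \<longleftrightarrow> i \<in> {1..k}" for i using permutes_in_image[OF s(1)] .
  have si: "\<sigma> i = \<sigma> j \<longleftrightarrow> i = j" for i j using permutes_inj[OF s(1)] by (auto dest: injD)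
  show ?thesis unfolding mulc_simp Cset_iff
  proof (intro conjI allI ballI impI)
    show "\<tau> \<circ> \<sigma> permutes {1..k}" using permutes_compose[OF s(1) t(1)] .
    show "evenperm (\<tau> \<circ> \<sigma>)" using perm_even_comp s t by blast
  next
    fix i j assume "case (i, j) of (i, j) \<Rightarrow> d (i, j) \<noteq> e (\<sigma> i, \<sigma> j)"
    hence "d (i,j) \<or> e (\<sigma> i, \<sigma> j)" by auto
    thus "i \<in> {1..k}" "j \<in> {1..k}" "i \<noteq> j" using s(3) t(3) sm si by blast+
  next
    fix i j assume ij: "i \<in> {1..k}" "j \<in> {1..k}" "i \<noteq> j"
    have A: "(d (i,j) \<noteq> d (j,i)) = invn \<sigma> i j" using s(4) ij by blast
    have B: "(e (\<sigma> i, \<sigma> j) \<noteq> e (\<sigma> j, \<sigma> i)) = invn \<tau> (\<sigma> i) (\<sigma> j)" using t(4) ij sm si by blast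
    show "((case (i, j) of (i, j) \<Rightarrow> d (i, j) \<noteq> e (\<sigma> i, \<sigma> j)) \<noteq>
          (case (j, i) of (i, j) \<Rightarrow> d (i, j) \<noteq> e (\<sigma> i, \<sigma> j))) = invn (\<tau> \<circ> \<sigma>) i j"
      using A B unfolding invn_def by auto
  qed
qed

lemma onec_closed: "onec \<in> Cset k"
  by (simp add: onec_def Cset_iff invn_def)

definition invc :: "elt \<Rightarrow> elt" where
  "invc x = (Hilbert_Choice.inv (fst x), \<lambda>(i,j). snd x (Hilbert_Choice.inv (fst x) i, Hilbert_Choice.inv (fst x) j))"

lemma invc_closed:
  assumes y: "(\<sigma>, d) \<in> Cset k"
  shows "invc (\<sigma>, d) \<in> Cset k" and "mulc (invc (\<sigma>, d)) (\<sigma>, d) = onec"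
proof -
  have s: "\<sigma> permutes {1..k}" "evenperm \<sigma>" "\<And>i j. d (i,j) \<Longrightarrow> i \<in> {1..k} \<and> j \<in> {1..k} \<and> i \<noteq> j"
    "\<And>i j. i\<in>{1..k} \<Longrightarrow> j\<in>{1..k} \<Longrightarrow> i \<noteq> j \<Longrightarrow> (d (i,j) \<noteq> d (j,i)) = invn \<sigma> i j"
    using y by (auto simp: Cset_iff)
  define \<rho> where "\<rho> = Hilbert_Choice.inv \<sigma>"
  have r: "\<rho> permutes {1..k}" unfolding \<rho>_def using permutes_inv[OF s(1)] .
  have re: "evenperm \<rho>" unfolding \<rho>_def using evenperm_inv[OF perm_k[OF s(1)]] s(2) by simp
  have rm: "\<rho> i \<in> {1..k} \<longleftrightarrow> i \<in> {1..k}" for i using permutes_in_image[OF r] .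
  have ri: "\<rho> i = \<rho> j \<longleftrightarrow> i = j" for i j using permutes_inj[OF r] by (auto dest: injD)
  have sr: "\<sigma> (\<rho> i) = i" "\<rho> (\<sigma> i) = i" for i unfolding \<rho>_def using permutes_inverses[OF s(1)] by auto
  show "invc (\<sigma>, d) \<in> Cset k" unfolding invc_def Cset_iff fst_conv snd_conv \<rho>_def[symmetric]
  proof (intro conjI allI ballI impI)
    fix i j assume "case (i, j) of (i, j) \<Rightarrow> d (\<rho> i, \<rho> j)"
    hence "d (\<rho> i, \<rho> j)" by simp
    thus "i \<in> {1..k}" "j \<in> {1..k}" "i \<noteq> j" using s(3) rm ri by blast+
  next
    fix i j assume ij: "i \<in> {1..k}" "j \<in> {1..k}" "i \<noteq> j"
    have A: "(d (\<rho> i, \<rho> j) \<noteq> d (\<rho> j, \<rho> i)) = invn \<sigma> (\<rho> i) (\<rho> j)" using s(4) ij rm ri by blast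
    show "((case (i, j) of (i, j) \<Rightarrow> d (\<rho> i, \<rho> j)) \<noteq> (case (j, i) of (i, j) \<Rightarrow> d (\<rho> i, \<rho> j))) = invn \<rho> i j"
      using A unfolding invn_def by (auto simp: sr)
  qed (use r re in auto)
  show "mulc (invc (\<sigma>, d)) (\<sigma>, d) = onec"
    unfolding invc_def mulc_simp onec_def using sr[unfolded \<rho>_def]
    by (auto simp: fun_eq_iff)
qed

lemma Gc_group: "group (Gc k)"
proof (rule groupI)
  fix x y assume "x \<in> carrier (Gc k)" "y \<in> carrier (Gc k)"
  thus "x \<otimes>\<^bsub>Gc k\<^esub> y \<in> carrier (Gc k)" unfolding Gc_def using mulc_closed
    by (metis monoid.select_convs(1) partial_object.select_convs(1) prod.collapse)
next
  show "\<one>\<^bsub>Gc k\<^esub> \<in> carrier (Gc k)" unfolding Gc_def using onec_closed by simp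
next
  fix x y z
  show "x \<otimes>\<^bsub>Gc k\<^esub> y \<otimes>\<^bsub>Gc k\<^esub> z = x \<otimes>\<^bsub>Gc k\<^esub> (y \<otimes>\<^bsub>Gc k\<^esub> z)"
    unfolding Gc_def by (auto simp: mulc_def fun_eq_iff)
next
  fix x show "\<one>\<^bsub>Gc k\<^esub> \<otimes>\<^bsub>Gc k\<^esub> x = x" unfolding Gc_def by (auto simp: mulc_def onec_def)
next
  fix x assume "x \<in> carrier (Gc k)"
  then obtain \<sigma> d where x: "x = (\<sigma>, d)" "(\<sigma>, d) \<in> Cset k" unfolding Gc_def by (cases x) auto
  show "\<exists>y\<in>carrier (Gc k). y \<otimes>\<^bsub>Gc k\<^esub> x = \<one>\<^bsub>Gc k\<^esub>"
    using invc_closed[OF x(2)] x(1) unfolding Gc_def by auto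
qed

lemma Gc_carrier: "carrier (Gc k) = Cset k" and Gc_mult: "x \<otimes>\<^bsub>Gc k\<^esub> y = mulc x y"
  and Gc_one: "\<one>\<^bsub>Gc k\<^esub> = onec"
  by (simp_all add: Gc_def)

lemma Cset_E:
  assumes "(\<sigma>, d) \<in> Cset k"
  shows "\<sigma> permutes {1..k}" "evenperm \<sigma>" "\<And>i j. d (i,j) \<Longrightarrow> i \<in> {1..k} \<and> j \<in> {1..k} \<and> i \<noteq> j"
    "\<And>i j. i\<in>{1..k} \<Longrightarrow> j\<in>{1..k} \<Longrightarrow> i \<noteq> j \<Longrightarrow> (d (i,j) \<noteq> d (j,i)) = invn \<sigma> i j"
  using assms by (auto simp: Cset_iff)

lemma Gc_hom: "fst \<in> hom (Gc k) (alt_group k)"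
  unfolding hom_def by (auto simp: Gc_def Cset_def alt_group_carrier alt_group_mult mulc_def)

lemma Gc_finite: "finite (carrier (Gc k))"
proof -
  define A where "A = {1..k} \<times> {1..k}"
  have "Cset k \<subseteq> {\<sigma>. \<sigma> permutes {1..k}} \<times> ((\<lambda>B p. p \<in> B) ` Pow A)"
  proof
    fix x assume x: "x \<in> Cset k"
    obtain \<sigma> d where xd: "x = (\<sigma>, d)" by (cases x)
    have "d = (\<lambda>p. p \<in> {p. d p})" by auto
    moreover have "{p. d p} \<in> Pow A" using Cset_E(3)[of \<sigma> d k] x xd unfolding A_def by auto
    ultimately have "d \<in> (\<lambda>B p. p \<in> B) ` Pow A" by blast
    thus "x \<in> {\<sigma>. \<sigma> permutes {1..k}} \<times> ((\<lambda>B p. p \<in> B) ` Pow A)"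
      using Cset_E(1)[of \<sigma> d k] x xd by auto
  qed
  moreover have "finite ({\<sigma>. \<sigma> permutes {1..k}} \<times> ((\<lambda>B p. p \<in> B) ` Pow A))"
    unfolding A_def by (intro finite_cartesian_product finite_permutations finite_imageI) auto
  ultimately show ?thesis unfolding Gc_carrier by (rule finite_subset)
qed

definition d0 :: "nat \<Rightarrow> (nat \<Rightarrow> nat) \<Rightarrow> nat \<times> nat \<Rightarrow> bool" where
  "d0 k \<sigma> p = (fst p \<in> {1..k} \<and> snd p \<in> {1..k} \<and> fst p < snd p \<and> \<sigma> (snd p) < \<sigma> (fst p))"

lemma d0_in:
  assumes "\<sigma> permutes {1..k}" "evenperm \<sigma>"
  shows "(\<sigma>, d0 k \<sigma>) \<in> Cset k"
proof -
  have si: "\<sigma> i = \<sigma> j \<longleftrightarrow> i = j" for i j using permutes_inj[OF assms(1)] by (auto dest: injD)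
  show ?thesis unfolding Cset_iff
  proof (intro conjI allI ballI impI)
    fix i j assume "i \<in> {1..k}" "j \<in> {1..k}" "i \<noteq> j"
    thus "(d0 k \<sigma> (i, j) \<noteq> d0 k \<sigma> (j, i)) = invn \<sigma> i j"
      unfolding d0_def invn_def using si[of i j] by auto
  qed (use assms in \<open>auto simp: d0_def\<close>)
qed

lemma toggle_in:
  assumes "(\<sigma>, d) \<in> Cset k" "i \<in> {1..k}" "j \<in> {1..k}" "i \<noteq> j"
  shows "(\<sigma>, \<lambda>p. d p \<noteq> (t \<and> (p = (i,j) \<or> p = (j,i)))) \<in> Cset k"
  using assms unfolding Cset_iff by auto

lemma Gc_surj: "fst ` carrier (Gc k) = carrier (alt_group k)"
proof
  show "fst ` carrier (Gc k) \<subseteq> carrier (alt_group k)" using Gc_hom hom_carrier by blast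
  show "carrier (alt_group k) \<subseteq> fst ` carrier (Gc k)"
  proof
    fix \<sigma> assume "\<sigma> \<in> carrier (alt_group k)"
    hence "(\<sigma>, d0 k \<sigma>) \<in> carrier (Gc k)" using d0_in by (simp add: alt_group_carrier Gc_carrier)
    thus "\<sigma> \<in> fst ` carrier (Gc k)" by force
  qed
qed

lemma Gc_kernel:
  assumes "x \<in> carrier (Gc k)" "fst x = id"
  shows "\<exists>d. x = (id, d)"
  using assms by (cases x) auto

lemma Gc_comm:
  assumes "x \<in> carrier (Gc k)" "y \<in> carrier (Gc k)" "fst x = id" "fst y = id"
  shows "x \<otimes>\<^bsub>Gc k\<^esub> y = y \<otimes>\<^bsub>Gc k\<^esub> x"
proof -
  obtain d where d: "x = (id, d)" using Gc_kernel[OF assms(1,3)] by blast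
  obtain e where e: "y = (id, e)" using Gc_kernel[OF assms(2,4)] by blast
  show ?thesis unfolding d e by (auto simp: Gc_mult mulc_def fun_eq_iff)
qed

lemma Gc_sq:
  assumes "x \<in> carrier (Gc k)" "fst x = id"
  shows "x \<otimes>\<^bsub>Gc k\<^esub> x = \<one>\<^bsub>Gc k\<^esub>"
proof -
  obtain d where "x = (id, d)" using Gc_kernel[OF assms(1,2)] by blast
  thus ?thesis by (auto simp: Gc_mult Gc_one onec_def mulc_def fun_eq_iff)
qed

lemma Gc_ex1:
  assumes "k \<ge> 2"
  shows "\<exists>x\<in>carrier (Gc k). fst x = id \<and> x \<noteq> \<one>\<^bsub>Gc k\<^esub>"
proof -
  define x where "x = ((id::nat\<Rightarrow>nat), \<lambda>p::nat\<times>nat. p = (1,2) \<or> p = (2,1))"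
  have "x \<in> carrier (Gc k)" unfolding x_def Gc_carrier Cset_iff invn_def using assms by auto
  moreover have "x \<noteq> \<one>\<^bsub>Gc k\<^esub>" unfolding x_def Gc_one onec_def by (auto simp: fun_eq_iff)
  ultimately show ?thesis by (intro bexI[of _ x]) (auto simp: x_def)
qed

definition sig0 :: "nat \<Rightarrow> nat" where
  "sig0 = Transposition.transpose 1 2 \<circ> Transposition.transpose 3 4"

lemma Gc_s0:
  assumes "k \<ge> 4"
  shows "\<exists>\<sigma>0\<in>carrier (alt_group k). \<sigma>0 \<circ> \<sigma>0 = id \<and>
    (\<forall>x\<in>carrier (Gc k). fst x = \<sigma>0 \<longrightarrow> x \<otimes>\<^bsub>Gc k\<^esub> x \<noteq> \<one>\<^bsub>Gc k\<^esub>)"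
proof (intro bexI conjI ballI impI)
  have p1: "Transposition.transpose 1 2 permutes {1..k}" using assms by (intro permutes_swap_id) auto
  have p2: "Transposition.transpose 3 4 permutes {1..k}" using assms by (intro permutes_swap_id) auto
  have "sig0 permutes {1..k}" unfolding sig0_def using permutes_compose[OF p2 p1] .
  moreover have "evenperm sig0" unfolding sig0_def
    using evenperm_comp[OF perm_k[OF p1] perm_k[OF p2]] by (simp add: evenperm_swap)
  ultimately show "sig0 \<in> carrier (alt_group k)" by (simp add: alt_group_carrier)
  show "sig0 \<circ> sig0 = id" by (auto simp: sig0_def fun_eq_iff transpose_def)
  fix x assume x: "x \<in> carrier (Gc k)" "fst x = sig0"
  then obtain d where xd: "x = (sig0, d)" by (cases x) auto
  have "(d (1,2) \<noteq> d (2,1)) = invn sig0 1 2" using Cset_E(4)[of sig0 d k 1 2] x xd assms by (auto simp: Gc_carrier)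
  hence "d (1,2) \<noteq> d (2,1)" by (simp add: invn_def sig0_def)
  hence "snd (mulc x x) (1,2) \<noteq> snd onec (1,2)" unfolding xd mulc_def onec_def by (simp add: sig0_def)
  thus "x \<otimes>\<^bsub>Gc k\<^esub> x \<noteq> \<one>\<^bsub>Gc k\<^esub>" by (auto simp: Gc_mult Gc_one)
qed

lemma two_elems:
  assumes "finite A" "card A \<ge> 2"
  obtains a b where "a \<in> A" "b \<in> A" "a \<noteq> b"
proof -
  have "\<not> card A \<le> Suc 0" using assms(2) by simp
  hence "\<not> (\<forall>a\<in>A. \<forall>b\<in>A. a = b)" using card_le_Suc0_iff_eq[OF assms(1)] by blast
  thus ?thesis using that by blast
qed

lemma two_trans:
  fixes k :: nat
  assumes k: "k \<ge> 4" and ij: "i \<in> {1..k}" "j \<in> {1..k}" "i \<noteq> j"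
    and ij': "i' \<in> {1..k}" "j' \<in> {1..k}" "i' \<noteq> j'"
  shows "\<exists>\<sigma>. \<sigma> permutes {1..k} \<and> evenperm \<sigma> \<and> \<sigma> i = i' \<and> \<sigma> j = j'"
proof -
  define j1 where "j1 = Transposition.transpose i i' j"
  have j1: "j1 \<in> {1..k}" unfolding j1_def transpose_def using ij ij' by auto
  have j1i': "j1 \<noteq> i'" unfolding j1_def transpose_def using ij by auto
  define \<sigma>1 where "\<sigma>1 = Transposition.transpose j1 j' \<circ> Transposition.transpose i i'"
  have pa: "Transposition.transpose i i' permutes {1..k}" using ij ij' by (intro permutes_swap_id) auto
  have pb: "Transposition.transpose j1 j' permutes {1..k}" using j1 ij' by (intro permutes_swap_id) auto
  have p1: "\<sigma>1 permutes {1..k}" unfolding \<sigma>1_def using permutes_compose[OF pa pb] .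
  have v1: "\<sigma>1 i = i'" "\<sigma>1 j = j'" unfolding \<sigma>1_def j1_def using j1i' ij' ij
    by (auto simp: transpose_def j1_def)
  show ?thesis
  proof (cases "evenperm \<sigma>1")
    case True thus ?thesis using p1 v1 by blast
  next
    case False
    have fin: "finite ({1..k} - {i', j'})" by simp
    have "card ({1..k} - {i', j'}) = card {1..k} - card {i',j'}"
      using ij' by (intro card_Diff_subset) auto
    also have "\<dots> = k - 2" using ij' by simp
    finally have "card ({1..k} - {i', j'}) \<ge> 2" using k by simp
    then obtain a b where ab: "a \<in> {1..k} - {i', j'}" "b \<in> {1..k} - {i', j'}" "a \<noteq> b"
      using two_elems[OF fin] by blast
    have pt: "Transposition.transpose a b permutes {1..k}" using ab by (intro permutes_swap_id) auto
    define \<sigma> where "\<sigma> = Transposition.transpose a b \<circ> \<sigma>1"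
    have "\<sigma> permutes {1..k}" unfolding \<sigma>_def using permutes_compose[OF p1 pt] .
    moreover have "evenperm \<sigma>" unfolding \<sigma>_def
      using evenperm_comp[OF perm_k[OF pt] perm_k[OF p1]] False ab(3) by (simp add: evenperm_swap)
    moreover have "\<sigma> i = i'" "\<sigma> j = j'" unfolding \<sigma>_def using v1 ab by auto
    ultimately show ?thesis by blast
  qed
qed

definition Pk :: "nat \<Rightarrow> (nat \<times> nat \<times> bool) set" where
  "Pk k = {p. fst p \<in> {1..k} \<and> fst (snd p) \<in> {1..k} \<and> fst p \<noteq> fst (snd p)}"

definition actP :: "elt \<Rightarrow> nat \<times> nat \<times> bool \<Rightarrow> nat \<times> nat \<times> bool" where
  "actP x p = (fst x (fst p), fst x (fst (snd p)), snd (snd p) \<noteq> snd x (fst p, fst (snd p)))"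

definition Ek :: "nat \<Rightarrow> nat set" where "Ek k = to_nat ` Pk k"

definition phik :: "nat \<Rightarrow> elt \<Rightarrow> nat \<Rightarrow> nat" where
  "phik k x = (\<lambda>n\<in>Ek k. to_nat (actP x (from_nat n)))"

lemma actP_mul: "actP (mulc x y) p = actP x (actP y p)"
  by (auto simp: actP_def mulc_def)

lemma actP_one: "actP onec p = p"
  by (auto simp: actP_def onec_def)

lemma actP_Pk:
  assumes "x \<in> Cset k" "p \<in> Pk k"
  shows "actP x p \<in> Pk k"
proof -
  obtain \<sigma> d where xd: "x = (\<sigma>, d)" by (cases x)
  have s: "\<sigma> permutes {1..k}" using Cset_E(1) assms(1) xd by blast
  have sm: "\<sigma> i \<in> {1..k} \<longleftrightarrow> i \<in> {1..k}" for i using permutes_in_image[OF s] .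
  have si: "\<sigma> i = \<sigma> j \<longleftrightarrow> i = j" for i j using permutes_inj[OF s] by (auto dest: injD)
  show ?thesis using assms(2) sm[of "fst p"] sm[of "fst (snd p)"] si[of "fst p" "fst (snd p)"]
    unfolding xd actP_def Pk_def by simp
qed

lemma phik_apply: "p \<in> Pk k \<Longrightarrow> phik k x (to_nat p) = to_nat (actP x p)"
  by (auto simp: phik_def Ek_def)

lemma phik_hom: "phik k \<in> hom (Gc k) (BijGroup (Ek k))"
proof -
  interpret G: group "Gc k" by (rule Gc_group)
  have inE: "phik k x n \<in> Ek k" if x: "x \<in> carrier (Gc k)" and n: "n \<in> Ek k" for x n
  proof -
    obtain p where p: "p \<in> Pk k" "n = to_nat p" using n unfolding Ek_def by blast
    have "actP x p \<in> Pk k" using actP_Pk[of x k p] x p(1) by (simp add: Gc_carrier)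
    thus ?thesis unfolding p(2) phik_apply[OF p(1)] Ek_def by blast
  qed
  have comp: "phik k (x \<otimes>\<^bsub>Gc k\<^esub> y) n = phik k x (phik k y n)"
    if x: "x \<in> carrier (Gc k)" and y: "y \<in> carrier (Gc k)" and n: "n \<in> Ek k" for x y n
  proof -
    obtain p where p: "p \<in> Pk k" "n = to_nat p" using n unfolding Ek_def by blast
    have "actP y p \<in> Pk k" using actP_Pk[of y k p] y p(1) by (simp add: Gc_carrier)
    thus ?thesis unfolding p(2) phik_apply[OF p(1)] phik_apply[OF \<open>actP y p \<in> Pk k\<close>] Gc_mult actP_mul by simp
  qed
  have one: "n \<in> Ek k \<Longrightarrow> phik k \<one>\<^bsub>Gc k\<^esub> n = n" for n
    unfolding Ek_def by (auto simp: phik_apply Gc_one actP_one)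
  have bij: "phik k x \<in> Bij (Ek k)" if x: "x \<in> carrier (Gc k)" for x
  proof -
    have ix: "inv\<^bsub>Gc k\<^esub> x \<in> carrier (Gc k)" using x by simp
    have "bij_betw (phik k x) (Ek k) (Ek k)"
    proof (rule bij_betw_byWitness[where f'="phik k (inv\<^bsub>Gc k\<^esub> x)"])
      show "\<forall>a\<in>Ek k. phik k (inv\<^bsub>Gc k\<^esub> x) (phik k x a) = a"
      proof
        fix a assume a: "a \<in> Ek k"
        have "phik k (inv\<^bsub>Gc k\<^esub> x) (phik k x a) = phik k (inv\<^bsub>Gc k\<^esub> x \<otimes>\<^bsub>Gc k\<^esub> x) a"
          using comp[OF ix x a] by simp
        also have "\<dots> = a" using one[OF a] x by simp
        finally show "phik k (inv\<^bsub>Gc k\<^esub> x) (phik k x a) = a" .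
      qed
      show "\<forall>a\<in>Ek k. phik k x (phik k (inv\<^bsub>Gc k\<^esub> x) a) = a"
      proof
        fix a assume a: "a \<in> Ek k"
        have "phik k x (phik k (inv\<^bsub>Gc k\<^esub> x) a) = phik k (x \<otimes>\<^bsub>Gc k\<^esub> inv\<^bsub>Gc k\<^esub> x) a"
          using comp[OF x ix a] by simp
        also have "\<dots> = a" using one[OF a] x by simp
        finally show "phik k x (phik k (inv\<^bsub>Gc k\<^esub> x) a) = a" .
      qed
      show "phik k x ` Ek k \<subseteq> Ek k" using inE x by blast
      show "phik k (inv\<^bsub>Gc k\<^esub> x) ` Ek k \<subseteq> Ek k" using inE ix by blast
    qed
    thus ?thesis unfolding Bij_def phik_def by auto
  qed
  show ?thesis
  proof (rule homI)
    fix x assume "x \<in> carrier (Gc k)" thus "phik k x \<in> carrier (BijGroup (Ek k))"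
      using bij by (simp add: BijGroup_def)
  next
    fix x y assume x: "x \<in> carrier (Gc k)" and y: "y \<in> carrier (Gc k)"
    have "phik k (x \<otimes>\<^bsub>Gc k\<^esub> y) = compose (Ek k) (phik k x) (phik k y)"
      unfolding compose_def using comp[OF x y] by (auto simp: phik_def fun_eq_iff)
    thus "phik k (x \<otimes>\<^bsub>Gc k\<^esub> y) = phik k x \<otimes>\<^bsub>BijGroup (Ek k)\<^esub> phik k y"
      using bij[OF x] bij[OF y] by (simp add: BijGroup_def)
  qed
qed

lemma phik_faithful:
  assumes k: "k \<ge> 2"
  shows "inj_on (phik k) (carrier (Gc k))"
proof (rule inj_onI)
  fix x y assume x: "x \<in> carrier (Gc k)" and y: "y \<in> carrier (Gc k)" and eq: "phik k x = phik k y"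
  obtain \<sigma> d where xd: "x = (\<sigma>, d)" by (cases x)
  obtain \<tau> e where ye: "y = (\<tau>, e)" by (cases y)
  have xc: "(\<sigma>, d) \<in> Cset k" using x xd by (simp add: Gc_carrier)
  have yc: "(\<tau>, e) \<in> Cset k" using y ye by (simp add: Gc_carrier)
  have A: "actP x p = actP y p" if "p \<in> Pk k" for p
    using fun_cong[OF eq, of "to_nat p"] phik_apply[OF that] by simp
  have B: "\<sigma> i = \<tau> i \<and> d (i,j) = e (i,j)" if "i \<in> {1..k}" "j \<in> {1..k}" "i \<noteq> j" for i j
  proof -
    have "(i, j, False) \<in> Pk k" using that by (simp add: Pk_def)
    from A[OF this] show ?thesis unfolding xd ye actP_def by simp
  qed
  have "\<sigma> = \<tau>"
  proof
    fix i show "\<sigma> i = \<tau> i"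
    proof (cases "i \<in> {1..k}")
      case True
      define j where "j = (if i = 1 then 2 else (1::nat))"
      have "j \<in> {1..k}" "j \<noteq> i" using k True unfolding j_def by auto
      thus ?thesis using B[of i j] True by auto
    next
      case False thus ?thesis using permutes_not_in[OF Cset_E(1)[OF xc]] permutes_not_in[OF Cset_E(1)[OF yc]] by metis
    qed
  qed
  moreover have "d = e"
  proof
    fix q :: "nat \<times> nat"
    obtain i j where q: "q = (i, j)" by (cases q)
    show "d q = e q"
    proof (cases "i \<in> {1..k} \<and> j \<in> {1..k} \<and> i \<noteq> j")
      case True thus ?thesis using B[of i j] q by auto
    next
      case False thus ?thesis using Cset_E(3)[OF xc, of i j] Cset_E(3)[OF yc, of i j] q by auto
    qed
  qed
  ultimately show "x = y" using xd ye by simp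
qed

lemma phik_transitive:
  assumes k: "k \<ge> 4" and a: "a \<in> Ek k" and b: "b \<in> Ek k"
  shows "\<exists>g\<in>carrier (Gc k). phik k g a = b"
proof -
  obtain i j s where p: "(i,j,s) \<in> Pk k" "a = to_nat (i,j,s)" using a unfolding Ek_def by auto
  obtain i' j' s' where p': "(i',j',s') \<in> Pk k" "b = to_nat (i',j',s')" using b unfolding Ek_def by auto
  have ij: "i \<in> {1..k}" "j \<in> {1..k}" "i \<noteq> j" using p(1) by (auto simp: Pk_def)
  have ij': "i' \<in> {1..k}" "j' \<in> {1..k}" "i' \<noteq> j'" using p'(1) by (auto simp: Pk_def)
  obtain \<sigma> where \<sigma>: "\<sigma> permutes {1..k}" "evenperm \<sigma>" "\<sigma> i = i'" "\<sigma> j = j'"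
    using two_trans[OF k ij ij'] by blast
  define t where "t = ((s \<noteq> d0 k \<sigma> (i,j)) \<noteq> s')"
  define g where "g = (\<sigma>, \<lambda>p. d0 k \<sigma> p \<noteq> (t \<and> (p = (i,j) \<or> p = (j,i))))"
  have "g \<in> carrier (Gc k)" unfolding g_def Gc_carrier using toggle_in[OF d0_in[OF \<sigma>(1,2)] ij] .
  moreover have "phik k g a = b" unfolding p(2) p'(2) phik_apply[OF p(1)]
    by (simp add: g_def actP_def \<sigma>(3,4) t_def) (cases s; cases s'; cases "d0 k \<sigma> (i, j)"; simp)
  ultimately show ?thesis by blast
qed

lemma Ek_card: "card (Ek k) = 2 * k * (k - 1)"
proof -
  define S where "S = {1..k}"
  define Q where "Q = S \<times> S - (\<lambda>i. (i,i)) ` S"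
  have "Pk k = (\<lambda>x. (fst (fst x), snd (fst x), snd x)) ` (Q \<times> (UNIV :: bool set))"
    unfolding Pk_def Q_def S_def by force
  moreover have "inj_on (\<lambda>x. (fst (fst x), snd (fst x), snd x)) (Q \<times> (UNIV :: bool set))"
    by (auto simp: inj_on_def)
  ultimately have "card (Pk k) = card (Q \<times> (UNIV :: bool set))" by (simp add: card_image)
  hence "card (Pk k) = card Q * 2" by (simp add: card_cartesian_product)
  moreover have "card Q = k * k - k"
  proof -
    have "card Q = card (S \<times> S) - card ((\<lambda>i. (i,i)) ` S)" unfolding Q_def
      by (rule card_Diff_subset) (auto simp: S_def)
    moreover have "card ((\<lambda>i. (i,i)) ` S) = k" by (subst card_image) (auto simp: S_def inj_on_def)
    moreover have "card (S \<times> S) = k * k" by (simp add: card_cartesian_product S_def)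
    ultimately show ?thesis by simp
  qed
  moreover have "card (Ek k) = card (Pk k)" unfolding Ek_def
    by (rule card_image) (meson inj_to_nat inj_on_subset subset_UNIV)
  ultimately show ?thesis by (simp add: diff_mult_distrib2)
qed

definition encf :: "nat \<Rightarrow> elt \<Rightarrow> nat" where
  "encf k x = to_nat (map (fst x) [0..<Suc k], map (snd x) (List.product [0..<Suc k] [0..<Suc k]))"

lemma encf_inj: "inj_on (encf k) (Cset k)"
proof (rule inj_onI)
  fix x y assume xc: "x \<in> Cset k" and yc: "y \<in> Cset k" and eq: "encf k x = encf k y"
  obtain \<sigma> d where xd: "x = (\<sigma>, d)" by (cases x)
  obtain \<tau> e where ye: "y = (\<tau>, e)" by (cases y)
  note xc' = xc[unfolded xd] and yc' = yc[unfolded ye]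
  have m1: "map \<sigma> [0..<Suc k] = map \<tau> [0..<Suc k]"
   and m2: "map d (List.product [0..<Suc k] [0..<Suc k]) = map e (List.product [0..<Suc k] [0..<Suc k])"
    using eq unfolding encf_def xd ye by auto
  have "\<sigma> = \<tau>"
  proof
    fix i show "\<sigma> i = \<tau> i"
    proof (cases "i \<le> k")
      case True thus ?thesis using m1 unfolding map_eq_conv by auto
    next
      case False
      hence "i \<notin> {1..k}" by auto
      thus ?thesis using permutes_not_in[OF Cset_E(1)[OF xc']] permutes_not_in[OF Cset_E(1)[OF yc']] by metis
    qed
  qed
  moreover have "d = e"
  proof
    fix q :: "nat \<times> nat"
    obtain i j where q: "q = (i, j)" by (cases q)
    show "d q = e q"
    proof (cases "i \<le> k \<and> j \<le> k")
      case True
      hence "(i,j) \<in> set (List.product [0..<Suc k] [0..<Suc k])" by auto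
      thus ?thesis using m2 q unfolding map_eq_conv by blast
    next
      case False thus ?thesis using Cset_E(3)[OF xc', of i j] Cset_E(3)[OF yc', of i j] q by auto
    qed
  qed
  ultimately show "x = y" using xd ye by simp
qed

lemma Gc_good:
  assumes k: "k \<ge> 4"
  shows "good k (Gc k) fst"
proof (rule good.intro)
  show "group (Gc k)" by (rule Gc_group)
  show "finite (carrier (Gc k))" by (rule Gc_finite)
  show "fst \<in> hom (Gc k) (alt_group k)" by (rule Gc_hom)
  show "fst ` carrier (Gc k) = carrier (alt_group k)" by (rule Gc_surj)
  show "\<exists>x\<in>carrier (Gc k). fst x = id \<and> x \<noteq> \<one>\<^bsub>Gc k\<^esub>" using Gc_ex1 k by simp
  show "x \<otimes>\<^bsub>Gc k\<^esub> y = y \<otimes>\<^bsub>Gc k\<^esub> x" if "x\<in>carrier (Gc k)" "y\<in>carrier (Gc k)" "fst x = id" "fst y = id" for x y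
    using Gc_comm that by blast
  show "x \<otimes>\<^bsub>Gc k\<^esub> x = \<one>\<^bsub>Gc k\<^esub>" if "x\<in>carrier (Gc k)" "fst x = id" for x
    using Gc_sq that by blast
  show "\<exists>\<sigma>0\<in>carrier (alt_group k). \<sigma>0 \<circ> \<sigma>0 = id \<and> (\<forall>x\<in>carrier (Gc k). fst x = \<sigma>0 \<longrightarrow> x \<otimes>\<^bsub>Gc k\<^esub> x \<noteq> \<one>\<^bsub>Gc k\<^esub>)"
    using Gc_s0[OF k] .
  have ga: "group_action (Gc k) (Ek k) (phik k)"
    unfolding group_action_def group_hom_def group_hom_axioms_def
    using Gc_group group_BijGroup phik_hom by blast
  have fa: "faithful_action (Gc k) (Ek k) (phik k)"
    unfolding faithful_action_def faithful_action_axioms_def using ga phik_faithful k by simp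
  have ta: "transitive_action (Gc k) (Ek k) (phik k)"
    unfolding transitive_action_def transitive_action_axioms_def using ga phik_transitive k by blast
  have c: "card (Ek k) = 2 * k * (k - 1)" by (rule Ek_card)
  have "card (Ek k) > 0" unfolding c using k by simp
  hence "finite (Ek k)" "Ek k \<noteq> {}" using card_gt_0_iff by blast+
  thus "\<exists>(E :: nat set) \<phi>. E \<noteq> {} \<and> finite E \<and> card E \<le> 2 * k * (k - 1) \<and>
              group_action (Gc k) E \<phi> \<and> faithful_action (Gc k) E \<phi> \<and> transitive_action (Gc k) E \<phi>"
    using ga fa ta c by (intro exI[of _ "Ek k"] exI[of _ "phik k"]) simp
qed

theorem theorem4p4:
  fixes k :: nat
  assumes "k \<ge> 7"
  shows "\<exists>(H :: nat monoid) (M :: nat set).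
           group H \<and> finite (carrier H) \<and>
           M \<lhd> H \<and> M \<noteq> {\<one>\<^bsub>H\<^esub>} \<and> elementary_abelian_2_subgroup H M \<and>
           H Mod M \<cong> alt_group k \<and>
           nonsplit_extension H M \<and>
           (\<exists>(E :: nat set) \<phi>. E \<noteq> {} \<and> finite E \<and> card E \<le> 2 * k * (k - 1) \<and>
              group_action H E \<phi> \<and> faithful_action H E \<phi> \<and> transitive_action H E \<phi>)"
proof -
  have gd: "good k (Gc k) fst" using assms by (intro Gc_good) simp
  have inj: "inj_on (encf k) (carrier (Gc k))" using encf_inj by (simp add: Gc_carrier)
  obtain H :: "nat monoid" and g where H: "group H" "g \<in> hom H (Gc k)" "bij_betw g (carrier H) (carrier (Gc k))"
    using nat_copy[OF Gc_group inj] by blast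
  have "good k H (fst \<circ> g)" by (rule good_transport[OF gd H])
  from good.final[OF this] show ?thesis by blast
qed

end
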